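(* Let $N\ge 1$ and let $M=\prod_{i=1}^{N}M_i\subset\mathbb{R}^N$ be compact, with each $M_i\subset\mathbb{R}$. Let $U=\prod_{i=1}^{N}U_i\subset\mathbb{C}^N$, where each $U_i$ is an open domain of $\mathbb{C}$ symmetric about the real axis with $M_i\subset U_i$ (so $M\subset U$), and let $\partial\bar U:=\prod_{i=1}^N\partial \bar U_i$. Let $f:M\to\mathbb{R}$ be continuous. Then for every $\epsilon>0$ there exist an integer $m\ge1$, points $\boldsymbol{\xi}_1,\dots,\boldsymbol{\xi}_m\in\partial\bar U$ and complex coefficients $\theta_1,\dots,\theta_m\in\mathbb{C}$ such that \[\sup_{\mathbf{x}\in M}\Big|f(\mathbf{x})-\sum_{k=1}^{m}\theta_k\,K(\boldsymbol{\xi}_k,\mathbf{x})\Big|<\epsilon .\]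
   Context: For $\boldsymbol{\xi}=(\xi^1,\dots,\xi^N)\in\partial\bar U$ (so $\xi^i\in\partial\bar U_i$ for each $i$) and $\mathbf{x}=(x_1,\dots,x_N)\in M$, the Cauchy kernel is $K(\boldsymbol{\xi},\mathbf{x}):=\prod_{i=1}^{N}\frac{1}{\xi^i-x_i}$; since $M_i\subset U_i$ is compact and $\xi^i$ lies on the boundary of $U_i$, the denominators do not vanish on $M$. *)

theory Defs
  imports "HOL-Analysis.Analysis"
begin

text \<open>Cauchy kernel K(xi, x) = prod_i 1/(xi_i - x_i), for xi in C^N and x in R^N.
  The dimension N is the cardinality of the finite index type 'n.\<close>
definition cauchy_kernel :: "complex ^ 'n \<Rightarrow> real ^ 'n \<Rightarrow> complex" where
  "cauchy_kernel \<xi> x = (\<Prod>i\<in>UNIV. 1 / (\<xi> $ i - complex_of_real (x $ i)))"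

definition sym_domain :: "complex set \<Rightarrow> bool" where
  "sym_domain U \<longleftrightarrow> open U \<and> connected U \<and> U \<noteq> {} \<and> (\<forall>z\<in>U. cnj z \<in> U)"

end

theory Submission
  imports Defs
begin

lemma front_disj:
  fixes V :: "complex set"
  assumes "open V" "z \<in> V" shows "z \<notin> frontier (closure V)"
proof -
  have "z \<in> interior (closure V)"
    using interior_maximal[OF closure_subset assms(1)] assms(2) by blast
  then show ?thesis by (simp add: frontier_def)
qed

lemma front_limpt:
  fixes V :: "complex set"
  assumes V: "open V" and z: "z \<in> frontier (closure V)"
  shows "z islimpt frontier (closure V)"
proof (rule ccontr)
  let ?F = "frontier (closure V)"
  assume "\<not> z islimpt ?F"
  then obtain r where r: "r > 0" "\<And>y. y \<in> ?F \<Longrightarrow> y \<noteq> z \<Longrightarrow> dist y z \<ge> r"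
    unfolding islimpt_approachable by (metis not_less)
  define D where "D = ball z r - {z}"
  have cD: "connected D" unfolding D_def
    by (rule connected_punctured_ball) simp
  have zc: "z \<in> closure V" and zi: "z \<notin> interior (closure V)"
    using z by (auto simp: frontier_def)
  have DF: "D \<subseteq> interior (closure V) \<union> - closure V"
  proof
    fix y assume "y \<in> D"
    then have "y \<in> ball z r" "y \<noteq> z" by (auto simp: D_def)
    then have "y \<notin> ?F" using r(2)[of y] by (auto simp: dist_commute)
    then show "y \<in> interior (closure V) \<union> - closure V" by (auto simp: frontier_def)
  qed
  have "D \<subseteq> interior (closure V) \<or> D \<subseteq> - closure V"
    using cD DF unfolding connected_def
    apply (simp only: not_ex)
    apply (erule_tac x="interior (closure V)" in allE)
    apply (erule_tac x="- closure V" in allE)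
    using interior_subset[of "closure V"] by auto
  then show False
  proof
    assume "D \<subseteq> interior (closure V)"
    then have "ball z r \<subseteq> closure V" using zc interior_subset[of "closure V"]
      by (auto simp: D_def)
    then have "z \<in> interior (closure V)" using r(1) by (meson centre_in_ball interior_maximal open_ball subsetD)
    then show False using zi by simp
  next
    assume "D \<subseteq> - closure V"
    moreover have "z \<notin> V" using front_disj[OF V] z by blast
    ultimately have bz: "ball z r \<inter> V = {}" using closure_subset[of V] by (auto simp: D_def)
    obtain y where "y \<in> V" "dist y z < r" using zc r(1) unfolding closure_approachable by blast
    then have "y \<in> ball z r \<inter> V" by (simp add: dist_commute)
    then show False using bz by simp
  qed
qed

lemma front_sym:
  fixes V :: "complex set"
  assumes s: "\<forall>w\<in>V. cnj w \<in> V" and z: "z \<in> frontier (closure V)"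
  shows "cnj z \<in> frontier (closure V)"
proof -
  have inj: "inj cnj" by (metis complex_cnj_cnj injI)
  have cV: "cnj ` V = V"
    using s by (auto simp: image_iff) (metis complex_cnj_cnj)
  have c1: "cnj ` closure V = closure V"
    using closure_injective_linear_image[OF linear_cnj inj, of V] cV by simp
  have c2: "cnj ` interior (closure V) = interior (closure V)"
    using interior_injective_linear_image[OF linear_cnj inj, of "closure V"] c1 by simp
  have "cnj ` frontier (closure V) = frontier (closure V)"
    unfolding frontier_def closure_closure using c1 c2 image_set_diff[OF inj] by metis
  then show ?thesis using z by blast
qed


definition plist :: "complex list \<Rightarrow> real \<Rightarrow> complex" where
  "plist l t = prod_list (map (\<lambda>z. 1 / (z - complex_of_real t)) l)"

definition GG :: "('n::finite \<Rightarrow> complex list) \<Rightarrow> real^'n \<Rightarrow> complex" where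
  "GG L x = (\<Prod>i\<in>UNIV. plist (L i) (x$i))"

lemma plist_simps[simp]: "plist [] t = 1" "plist (z # l) t = 1 / (z - complex_of_real t) * plist l t"
  "plist (l @ l') t = plist l t * plist l' t"
  by (simp_all add: plist_def)

lemma plist_remove1: "z \<in> set l \<Longrightarrow> plist l t = 1 / (z - complex_of_real t) * plist (remove1 z l) t"
  by (induction l) auto

lemma GG_split: "GG L x = plist (L j) (x$j) * (\<Prod>i\<in>UNIV-{j}. plist (L i) (x$i))"
  unfolding GG_def by (simp add: prod.remove)

lemma GG_upd: "GG (L(j:=l)) x = plist l (x$j) * (\<Prod>i\<in>UNIV-{j}. plist (L i) (x$i))"
  unfolding GG_split[of _ _ j] by (auto intro!: prod.cong)

lemma kernel_GG: "cauchy_kernel \<xi> x = GG (\<lambda>i. [\<xi>$i]) x"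
  by (simp add: cauchy_kernel_def GG_def)

lemma GG_mult: "GG L x * GG L' x = GG (\<lambda>i. L i @ L' i) x"
  by (simp add: GG_def prod.distrib)

lemma GG_nil: "GG (\<lambda>_. []) x = 1"
  by (simp add: GG_def)

lemma plist_cont:
  assumes "\<And>z. z \<in> set l \<Longrightarrow> \<forall>x\<in>M. z \<noteq> complex_of_real (x$j)"
  shows "continuous_on M (\<lambda>x. plist l (x$j))"
  using assms
proof (induction l)
  case Nil then show ?case by simp
next
  case (Cons z l)
  have "continuous_on M (\<lambda>x. 1 / (z - complex_of_real (x$j)))"
    using Cons.prems by (intro continuous_intros) auto
  then show ?case using Cons by (auto intro!: continuous_intros)
qed

lemma GG_cont:
  assumes "\<And>i z. z \<in> set (L i) \<Longrightarrow> \<forall>x\<in>M. z \<noteq> complex_of_real (x$i)"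
  shows "continuous_on M (GG L)"
  unfolding GG_def using plist_cont[OF assms] by (intro continuous_intros) auto


lemma sum_upd: "(\<Sum>i\<in>UNIV. f ((L(j:=l)) i)) = f l + (\<Sum>i\<in>UNIV-{j}. f (L i))"
  for L :: "'n::finite \<Rightarrow> 'a" and f :: "'a \<Rightarrow> nat"
proof -
  have "(\<Sum>i\<in>UNIV. f ((L(j:=l)) i)) = f ((L(j:=l)) j) + (\<Sum>i\<in>UNIV-{j}. f ((L(j:=l)) i))"
    by (rule sum.remove) simp_all
  then show ?thesis by (auto intro!: sum.cong)
qed

locale KSs =
  fixes M :: "(real^'n::finite) set" and Gm :: "'n \<Rightarrow> complex set"
  assumes compM: "compact M"
    and disj: "\<And>i x. x \<in> M \<Longrightarrow> complex_of_real (x$i) \<notin> Gm i"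
    and limpt: "\<And>i z. z \<in> Gm i \<Longrightarrow> z islimpt Gm i"
    and ne: "\<And>i. Gm i \<noteq> {}"
    and sym: "\<And>i z. z \<in> Gm i \<Longrightarrow> cnj z \<in> Gm i"
begin

inductive_set KS :: "(real^'n \<Rightarrow> complex) set" where
  KS0: "(\<lambda>x. 0) \<in> KS"
| KS1: "s \<in> KS \<Longrightarrow> (\<forall>i. \<xi>$i \<in> Gm i) \<Longrightarrow> (\<lambda>x. s x + c * cauchy_kernel \<xi> x) \<in> KS"

lemma KS_add': "t \<in> KS \<Longrightarrow> s \<in> KS \<Longrightarrow> (\<lambda>x. s x + t x) \<in> KS"
proof (induction t rule: KS.induct)
  case KS0 then show ?case by simp
next
  case (KS1 t \<xi> c)
  from KS.KS1[OF KS1.IH[OF KS1.prems] KS1.hyps(2), of c] show ?case by (simp add: add.assoc)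
qed

lemma KS_add: "s \<in> KS \<Longrightarrow> t \<in> KS \<Longrightarrow> (\<lambda>x. s x + t x) \<in> KS"
  using KS_add' by blast

lemma KS_scale: "s \<in> KS \<Longrightarrow> (\<lambda>x. a * s x) \<in> KS"
proof (induction s rule: KS.induct)
  case KS0 then show ?case by (simp add: KS.KS0)
next
  case (KS1 t \<xi> c)
  from KS.KS1[OF KS1.IH KS1.hyps(2), of "a*c"] show ?case by (simp add: algebra_simps)
qed

definition B where "B = {g. \<forall>e>0. \<exists>s\<in>KS. \<forall>x\<in>M. cmod (g x - s x) \<le> e}"

lemma KS_B: "s \<in> KS \<Longrightarrow> s \<in> B"
  unfolding B_def by force

lemma B_cong: "g \<in> B \<Longrightarrow> (\<And>x. x\<in>M \<Longrightarrow> g x = h x) \<Longrightarrow> h \<in> B"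
  unfolding B_def by auto

lemma B_limit:
  assumes "\<And>e. e>0 \<Longrightarrow> \<exists>g\<in>B. \<forall>x\<in>M. cmod (h x - g x) \<le> e"
  shows "h \<in> B"
  unfolding B_def mem_Collect_eq
proof (intro allI impI)
  fix e :: real assume e: "e > 0"
  obtain g where g: "g \<in> B" "\<forall>x\<in>M. cmod (h x - g x) \<le> e/2" using assms[of "e/2"] e by auto
  obtain s where s: "s \<in> KS" "\<forall>x\<in>M. cmod (g x - s x) \<le> e/2" using g(1) half_gt_zero[OF e] unfolding B_def by blast
  have "\<forall>x\<in>M. cmod (h x - s x) \<le> e"
  proof
    fix x assume x: "x \<in> M"
    have "cmod (h x - s x) \<le> cmod (h x - g x) + cmod (g x - s x)"
      using norm_triangle_ineq[of "h x - g x" "g x - s x"] by simp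
    then show "cmod (h x - s x) \<le> e" using g(2) s(2) x by fastforce
  qed
  then show "\<exists>s\<in>KS. \<forall>x\<in>M. cmod (h x - s x) \<le> e" using s(1) by blast
qed

lemma B_add: assumes "g \<in> B" "h \<in> B" shows "(\<lambda>x. g x + h x) \<in> B"
  unfolding B_def mem_Collect_eq
proof (intro allI impI)
  fix e :: real assume e: "e > 0"
  obtain s where s: "s \<in> KS" "\<forall>x\<in>M. cmod (g x - s x) \<le> e/2" using assms(1) half_gt_zero[OF e] unfolding B_def by blast
  obtain t where t: "t \<in> KS" "\<forall>x\<in>M. cmod (h x - t x) \<le> e/2" using assms(2) half_gt_zero[OF e] unfolding B_def by blast
  have *: "\<forall>x\<in>M. cmod (g x + h x - (s x + t x)) \<le> e"
  proof
    fix x assume x: "x \<in> M"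
    have "cmod (g x + h x - (s x + t x)) \<le> cmod (g x - s x) + cmod (h x - t x)"
      by (metis add_diff_add norm_triangle_ineq)
    then show "cmod (g x + h x - (s x + t x)) \<le> e" using s(2) t(2) x by fastforce
  qed
  show "\<exists>u\<in>KS. \<forall>x\<in>M. cmod (g x + h x - u x) \<le> e"
    by (rule bexI[where x="\<lambda>x. s x + t x"]) (use * KS_add[OF s(1) t(1)] in auto)
qed

lemma B_scale: assumes "g \<in> B" shows "(\<lambda>x. a * g x) \<in> B"
  unfolding B_def mem_Collect_eq
proof (intro allI impI)
  fix e :: real assume e: "e > 0"
  have c: "cmod a + 1 > 0" using norm_ge_zero[of a] by linarith
  have e': "e / (cmod a + 1) > 0" using e c by (intro divide_pos_pos)
  obtain s where s: "s \<in> KS" "\<forall>x\<in>M. cmod (g x - s x) \<le> e / (cmod a + 1)"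
    using assms e' unfolding B_def by blast
  have "\<forall>x\<in>M. cmod (a * g x - a * s x) \<le> e"
  proof
    fix x assume x: "x \<in> M"
    have "cmod (a * g x - a * s x) = cmod a * cmod (g x - s x)"
      by (metis norm_mult right_diff_distrib)
    also have "\<dots> \<le> (cmod a + 1) * (e / (cmod a + 1))"
      using s(2) x by (intro mult_mono) auto
    also have "\<dots> = e" using c by simp
    finally show "cmod (a * g x - a * s x) \<le> e" .
  qed
  then show "\<exists>u\<in>KS. \<forall>x\<in>M. cmod (a * g x - u x) \<le> e"
    by (intro bexI[where x="\<lambda>x. a * s x"] KS_scale[OF s(1)])
qed

lemma dist_pos:
  assumes "\<eta> \<in> Gm j" shows "\<exists>d>0. \<forall>x\<in>M. d \<le> cmod (\<eta> - complex_of_real (x$j))"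
proof (cases "M = {}")
  case True then show ?thesis by (auto intro: exI[of _ 1])
next
  case False
  let ?P = "(\<lambda>x. complex_of_real (x$j)) ` M"
  have "compact ?P" using compM by (intro compact_continuous_image continuous_intros)
  then have "closed ?P" by (rule compact_imp_closed)
  moreover have "?P \<noteq> {}" using False by simp
  moreover have "\<eta> \<notin> ?P" using disj assms by auto
  ultimately have d: "infdist \<eta> ?P > 0" by (rule infdist_pos_not_in_closed)
  have "\<forall>x\<in>M. infdist \<eta> ?P \<le> cmod (\<eta> - complex_of_real (x$j))"
    by (metis dist_complex_def image_eqI infdist_le)
  then show ?thesis using d by blast
qed

lemma GG_bounded:
  assumes "\<forall>i. set (L i) \<subseteq> Gm i" shows "\<exists>C>0. \<forall>x\<in>M. cmod (GG L x) \<le> C"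
proof -
  have "continuous_on M (GG L)"
    by (rule GG_cont) (use assms disj in blast)
  then have "compact (GG L ` M)" using compM by (rule compact_continuous_image)
  then have "bounded (GG L ` M)" by (rule compact_imp_bounded)
  then show ?thesis unfolding bounded_pos by auto
qed

end
context KSs begin

lemma pf_identity:
  fixes a b q R :: complex
  assumes "a \<noteq> 0" "b \<noteq> 0" "b \<noteq> a"
  shows "1 / a * (1 / b * q) * R = 1 / (b - a) * (1 / a * q * R - 1 / b * q * R)"
  using assms by (simp add: field_simps)

lemma stage1:
  "(\<forall>i. set (L i) \<subseteq> Gm i) \<Longrightarrow> (\<forall>i. L i \<noteq> []) \<Longrightarrow> GG L \<in> B"
proof (induction "\<Sum>i\<in>UNIV. length (L i)" arbitrary: L rule: less_induct)
  case less
  have distinct: "GG L2 \<in> B"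
    if sz: "(\<Sum>i\<in>UNIV. length (L2 i)) = (\<Sum>i\<in>UNIV. length (L i))"
      and ok: "\<forall>i. set (L2 i) \<subseteq> Gm i" and nE: "\<forall>i. L2 i \<noteq> []"
      and Lj: "L2 j = \<eta> # L'" and z: "\<zeta> \<in> set L'" "\<zeta> \<noteq> \<eta>" for L2 j \<eta> L' \<zeta>
  proof -
    define A where "A = L2(j := \<eta> # remove1 \<zeta> L')"
    define Bl where "Bl = L2(j := L')"
    have lL: "length L' > 0" using z by (cases L') auto
    have s0: "(\<Sum>i\<in>UNIV. length (L2 i)) = Suc (length L') + (\<Sum>i\<in>UNIV-{j}. length (L2 i))"
      using sum_upd[of length L2 j "L2 j", unfolded fun_upd_triv] Lj by simp
    have sA: "(\<Sum>i\<in>UNIV. length (A i)) = length L' + (\<Sum>i\<in>UNIV-{j}. length (L2 i))"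
      unfolding A_def using sum_upd[of length L2 j] lL z by (simp add: length_remove1)
    have sB: "(\<Sum>i\<in>UNIV. length (Bl i)) = length L' + (\<Sum>i\<in>UNIV-{j}. length (L2 i))"
      unfolding Bl_def using sum_upd[of length L2 j] by simp
    have okA: "\<forall>i. set (A i) \<subseteq> Gm i"
    proof
      fix i show "set (A i) \<subseteq> Gm i"
      proof (cases "i = j")
        case True
        then show ?thesis using ok[rule_format, of j] Lj set_remove1_subset[of \<zeta> L']
          unfolding A_def by auto
      next
        case False then show ?thesis using ok unfolding A_def by simp
      qed
    qed
    have okB: "\<forall>i. set (Bl i) \<subseteq> Gm i" using ok[rule_format, of j] ok Lj unfolding Bl_def by auto
    have nA: "\<forall>i. A i \<noteq> []" using nE unfolding A_def by auto
    have nB: "\<forall>i. Bl i \<noteq> []" using nE lL unfolding Bl_def by auto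
    have GA: "GG A \<in> B" using less.hyps[of A] sA s0 sz okA nA by simp
    have GB: "GG Bl \<in> B" using less.hyps[of Bl] sB s0 sz okB nB by simp
    have "(\<lambda>x. 1 / (\<zeta> - \<eta>) * (GG A x + (-1) * GG Bl x)) \<in> B"
      by (intro B_scale B_add GA GB)
    then show ?thesis
    proof (rule B_cong)
      fix x assume x: "x \<in> M"
      let ?t = "complex_of_real (x$j)"
      let ?R = "\<Prod>i\<in>UNIV-{j}. plist (L2 i) (x$i)"
      have e\<eta>: "\<eta> \<in> Gm j" and e\<zeta>: "\<zeta> \<in> Gm j" using ok[rule_format, of j] Lj z by auto
      have a: "\<eta> - ?t \<noteq> 0" using disj[OF x, of j] e\<eta> by auto
      have b: "\<zeta> - ?t \<noteq> 0" using disj[OF x, of j] e\<zeta> by auto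
      have ab: "\<zeta> - ?t \<noteq> \<eta> - ?t" using z by auto
      have "GG L2 x = 1 / (\<eta> - ?t) * (1 / (\<zeta> - ?t) * plist (remove1 \<zeta> L') (x$j)) * ?R"
        using GG_split[of L2 x j] Lj plist_remove1[OF z(1)] by simp
      also have "\<dots> = 1 / (\<zeta> - \<eta>) * (GG A x + (-1) * GG Bl x)"
        unfolding A_def Bl_def GG_upd
        using pf_identity[OF a b ab, of "plist (remove1 \<zeta> L') (x$j)" ?R] plist_remove1[OF z(1)]
        by simp
      finally show "1 / (\<zeta> - \<eta>) * (GG A x + (-1) * GG Bl x) = GG L2 x" by simp
    qed
  qed
  show ?case
  proof (cases "\<forall>i. length (L i) = 1")
    case True
    define \<xi> where "\<xi> = (\<chi> i. hd (L i))"
    have L: "L i = [\<xi>$i]" for i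
      using True[rule_format, of i] by (cases "L i") (auto simp: \<xi>_def)
    have "\<forall>i. \<xi>$i \<in> Gm i" using less.prems(1) L by (metis list.set_intros(1) subsetD)
    then have "(\<lambda>x. 0 + 1 * cauchy_kernel \<xi> x) \<in> KS" by (rule KS.KS1[OF KS.KS0])
    then have "(\<lambda>x. 0 + 1 * cauchy_kernel \<xi> x) \<in> B" by (rule KS_B)
    then show ?thesis
      by (rule B_cong) (simp add: kernel_GG L[symmetric])
  next
    case False
    then obtain j where j: "length (L j) \<noteq> 1" by blast
    obtain \<eta> L' where Lj: "L j = \<eta> # L'" and L'ne: "L' \<noteq> []"
      using less.prems(2) j by (cases "L j") auto
    show ?thesis
    proof (cases "\<exists>\<zeta>\<in>set L'. \<zeta> \<noteq> \<eta>")
      case True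
      then show ?thesis using distinct[OF refl less.prems Lj] by blast
    next
      case False
      have e\<eta>: "\<eta> \<in> Gm j" using less.prems(1)[rule_format, of j] Lj by auto
      have \<eta>L': "\<eta> \<in> set L'" using False L'ne by (cases L') auto
      define Bl where "Bl = L(j := L')"
      have okB: "\<forall>i. set (Bl i) \<subseteq> Gm i" using less.prems(1)[rule_format, of j] less.prems(1) Lj unfolding Bl_def by auto
      obtain d where d: "d > 0" "\<forall>x\<in>M. d \<le> cmod (\<eta> - complex_of_real (x$j))"
        using dist_pos[OF e\<eta>] by blast
      obtain C where C: "C > 0" "\<forall>x\<in>M. cmod (GG Bl x) \<le> C"
        using GG_bounded[OF okB] by blast
      show ?thesis
      proof (rule B_limit)
        fix e :: real assume e: "e > 0"
        define r where "r = min (d/2) (e * d^2 / (2*C))"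
        have r: "r > 0" using d e C by (simp add: r_def)
        obtain \<eta>' where \<eta>': "\<eta>' \<in> Gm j" "\<eta>' \<noteq> \<eta>" "dist \<eta>' \<eta> < r"
          using limpt[OF e\<eta>] r unfolding islimpt_approachable by blast
        define L2 where "L2 = L(j := \<eta>' # L')"
        have sz: "(\<Sum>i\<in>UNIV. length (L2 i)) = (\<Sum>i\<in>UNIV. length (L i))"
          unfolding L2_def using sum_upd[of length L j] sum_upd[of length L j "L j", unfolded fun_upd_triv] Lj by simp
        have ok2: "\<forall>i. set (L2 i) \<subseteq> Gm i" using less.prems(1)[rule_format, of j] less.prems(1) Lj \<eta>'(1) unfolding L2_def by auto
        have ne2: "\<forall>i. L2 i \<noteq> []" using less.prems(2) unfolding L2_def by auto
        have L2j: "L2 j = \<eta>' # L'" by (simp add: L2_def)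
        have G2: "GG L2 \<in> B"
          using distinct[OF sz ok2 ne2 L2j \<eta>L'] \<eta>'(2) by simp
        have "\<forall>x\<in>M. cmod (GG L x - GG L2 x) \<le> e"
        proof
          fix x assume x: "x \<in> M"
          let ?t = "complex_of_real (x$j)"
          let ?R = "\<Prod>i\<in>UNIV-{j}. plist (L i) (x$i)"
          have d1: "d \<le> cmod (\<eta> - ?t)" using d x by auto
          have "cmod (\<eta> - ?t) \<le> cmod (\<eta>' - ?t) + cmod (\<eta>' - \<eta>)"
            using norm_triangle_ineq[of "\<eta>' - ?t" "\<eta> - \<eta>'"] by (simp add: norm_minus_commute)
          moreover have "cmod (\<eta>' - \<eta>) < r" using \<eta>'(3) by (simp add: dist_norm)
          ultimately have d2: "d/2 \<le> cmod (\<eta>' - ?t)" using d1 by (simp add: r_def)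
          have a: "\<eta> - ?t \<noteq> 0" and b: "\<eta>' - ?t \<noteq> 0" using d1 d2 d(1) by auto
          have "GG L x - GG L2 x = (1 / (\<eta> - ?t) - 1 / (\<eta>' - ?t)) * GG Bl x"
            unfolding L2_def Bl_def GG_upd GG_split[of L x j] Lj by (simp add: algebra_simps)
          also have "1 / (\<eta> - ?t) - 1 / (\<eta>' - ?t) = (\<eta>' - \<eta>) / ((\<eta> - ?t) * (\<eta>' - ?t))"
            using a b by (simp add: field_simps)
          finally have eq: "cmod (GG L x - GG L2 x) = cmod (\<eta>' - \<eta>) / (cmod (\<eta> - ?t) * cmod (\<eta>' - ?t)) * cmod (GG Bl x)"
            by (simp add: norm_mult norm_divide)
          have "cmod (\<eta> - ?t) * cmod (\<eta>' - ?t) \<ge> d * (d/2)"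
            using d1 d2 d(1) by (intro mult_mono) auto
          then have "cmod (\<eta>' - \<eta>) / (cmod (\<eta> - ?t) * cmod (\<eta>' - ?t)) \<le> r / (d * (d/2))"
            using \<eta>'(3) d(1) r by (intro frac_le) (auto simp: dist_norm)
          also have "\<dots> \<le> (e * d^2 / (2*C)) / (d * (d/2))"
            using d(1) by (intro divide_right_mono) (auto simp: r_def)
          also have "\<dots> = e / C" using d(1) C(1) by (simp add: field_simps power2_eq_square)
          finally have q: "cmod (\<eta>' - \<eta>) / (cmod (\<eta> - ?t) * cmod (\<eta>' - ?t)) \<le> e / C" .
          have "cmod (GG L x - GG L2 x) \<le> e / C * C"
            unfolding eq using q C x e by (intro mult_mono) auto
          then show "cmod (GG L x - GG L2 x) \<le> e" using C(1) by simp
        qed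
        then show "\<exists>g\<in>B. \<forall>x\<in>M. cmod (GG L x - g x) \<le> e" using G2 by blast
      qed
    qed
  qed
qed

end
context KSs begin

inductive_set SA :: "(real^'n \<Rightarrow> complex) set" where
  SA_G: "\<forall>i. set (L i) \<subseteq> Gm i \<Longrightarrow> GG L \<in> SA"
| SA_add: "s \<in> SA \<Longrightarrow> t \<in> SA \<Longrightarrow> (\<lambda>x. s x + t x) \<in> SA"
| SA_scale: "s \<in> SA \<Longrightarrow> (\<lambda>x. c * s x) \<in> SA"

lemma SA_mult_G: "s \<in> SA \<Longrightarrow> \<forall>i. set (L i) \<subseteq> Gm i \<Longrightarrow> (\<lambda>x. s x * GG L x) \<in> SA"
proof (induction s rule: SA.induct)
  case (SA_G L1)
  have "GG (\<lambda>i. L1 i @ L i) \<in> SA" using SA_G by (intro SA.SA_G) auto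
  then show ?case by (simp add: GG_mult)
next
  case (SA_add s t)
  have "(\<lambda>x. s x * GG L x) \<in> SA" "(\<lambda>x. t x * GG L x) \<in> SA" using SA_add by auto
  from SA.SA_add[OF this] show ?case by (simp add: distrib_right)
next
  case (SA_scale s c)
  have "(\<lambda>x. s x * GG L x) \<in> SA" using SA_scale by auto
  from SA.SA_scale[OF this, of c] show ?case by (simp add: mult.assoc)
qed

lemma SA_mult': "t \<in> SA \<Longrightarrow> s \<in> SA \<Longrightarrow> (\<lambda>x. s x * t x) \<in> SA"
proof (induction t rule: SA.induct)
  case (SA_G L) then show ?case using SA_mult_G by blast
next
  case (SA_add t1 t2)
  have "(\<lambda>x. s x * t1 x) \<in> SA" "(\<lambda>x. s x * t2 x) \<in> SA" using SA_add by auto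
  from SA.SA_add[OF this] show ?case by (simp add: distrib_left)
next
  case (SA_scale t c)
  have "(\<lambda>x. s x * t x) \<in> SA" using SA_scale by auto
  from SA.SA_scale[OF this, of c] show ?case by (simp add: algebra_simps)
qed

lemma SA_B:
  assumes "s \<in> SA" "\<forall>i. set (L0 i) \<subseteq> Gm i" "\<forall>i. L0 i \<noteq> []"
  shows "(\<lambda>x. s x * GG L0 x) \<in> B"
  using assms(1)
proof (induction s rule: SA.induct)
  case (SA_G L)
  have "GG (\<lambda>i. L i @ L0 i) \<in> B" using SA_G assms(2,3) by (intro stage1) auto
  then show ?case by (simp add: GG_mult)
next
  case (SA_add s t)
  from B_add[OF SA_add.IH] show ?case by (simp add: distrib_right)
next
  case (SA_scale s c)
  from B_scale[OF SA_scale.IH, of c] show ?case by (simp add: mult.assoc)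
qed

definition \<xi>0 :: "'n \<Rightarrow> complex" where "\<xi>0 i = (SOME z. z \<in> Gm i)"

lemma \<xi>0: "\<xi>0 i \<in> Gm i"
  unfolding \<xi>0_def using ne[of i] by (simp add: some_in_eq)

lemma den_ne: "x \<in> M \<Longrightarrow> z \<in> Gm i \<Longrightarrow> z - complex_of_real (x$i) \<noteq> 0"
  using disj by force

lemma Re_cnj: "complex_of_real (Re z) = (1/2) * (z + cnj z)"
  by (simp add: complex_eq_iff)

lemma Im_cnj: "complex_of_real (Im z) = (-\<i>/2) * (z + (-1) * cnj z)"
  by (simp add: complex_eq_iff)

definition R where
  "R = {h. continuous_on M h \<and> (\<exists>s\<in>SA. \<forall>x\<in>M. complex_of_real (h x) = s x)}"

lemma GG_single: "GG ((\<lambda>_. [])(i := [z])) x = 1 / (z - complex_of_real (x$i))"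
  unfolding GG_upd by simp

lemma Re_in_R: "(\<lambda>x. Re (1 / (\<xi>0 i - complex_of_real (x$i)))) \<in> R"
proof -
  have c: "continuous_on M (\<lambda>x. Re (1 / (\<xi>0 i - complex_of_real (x$i))))"
    using den_ne[OF _ \<xi>0] by (intro continuous_intros) auto
  let ?L1 = "(\<lambda>_. []::complex list)(i := [\<xi>0 i])" and ?L2 = "(\<lambda>_. []::complex list)(i := [cnj (\<xi>0 i)])"
  have sa: "(\<lambda>x. (1/2) * (GG ?L1 x + GG ?L2 x)) \<in> SA"
    using \<xi>0[of i] sym[OF \<xi>0[of i]] by (intro SA.intros) auto
  have eq: "\<forall>x\<in>M. complex_of_real (Re (1 / (\<xi>0 i - complex_of_real (x$i)))) = (1/2) * (GG ?L1 x + GG ?L2 x)"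
  proof
    fix x
    let ?w = "1 / (\<xi>0 i - complex_of_real (x$i))"
    have "cnj ?w = 1 / (cnj (\<xi>0 i) - complex_of_real (x$i))" by simp
    then show "complex_of_real (Re ?w) = (1/2) * (GG ?L1 x + GG ?L2 x)"
      unfolding GG_single Re_cnj[of ?w] by simp
  qed
  show ?thesis unfolding R_def mem_Collect_eq using c eq by (intro conjI bexI[OF _ sa])
qed

lemma Im_in_R: "(\<lambda>x. Im (1 / (\<xi>0 i - complex_of_real (x$i)))) \<in> R"
proof -
  have c: "continuous_on M (\<lambda>x. Im (1 / (\<xi>0 i - complex_of_real (x$i))))"
    using den_ne[OF _ \<xi>0] by (intro continuous_intros) auto
  let ?L1 = "(\<lambda>_. []::complex list)(i := [\<xi>0 i])" and ?L2 = "(\<lambda>_. []::complex list)(i := [cnj (\<xi>0 i)])"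
  have sa: "(\<lambda>x. (-\<i>/2) * (GG ?L1 x + (-1) * GG ?L2 x)) \<in> SA"
    using \<xi>0[of i] sym[OF \<xi>0[of i]] by (intro SA.intros) auto
  have eq: "\<forall>x\<in>M. complex_of_real (Im (1 / (\<xi>0 i - complex_of_real (x$i)))) = (-\<i>/2) * (GG ?L1 x + (-1) * GG ?L2 x)"
  proof
    fix x
    let ?w = "1 / (\<xi>0 i - complex_of_real (x$i))"
    have "cnj ?w = 1 / (cnj (\<xi>0 i) - complex_of_real (x$i))" by simp
    then show "complex_of_real (Im ?w) = (-\<i>/2) * (GG ?L1 x + (-1) * GG ?L2 x)"
      unfolding GG_single Im_cnj[of ?w] by simp
  qed
  show ?thesis unfolding R_def mem_Collect_eq using c eq by (intro conjI bexI[OF _ sa])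
qed

lemma fr: "function_ring_on R M"
proof
  show "compact M" by (rule compM)
next
  fix f assume "f \<in> R" then show "continuous_on M f" by (simp add: R_def)
next
  fix f g assume f: "f \<in> R" and g: "g \<in> R"
  obtain s where s: "s \<in> SA" "\<forall>x\<in>M. complex_of_real (f x) = s x" using f by (auto simp: R_def)
  obtain t where t: "t \<in> SA" "\<forall>x\<in>M. complex_of_real (g x) = t x" using g by (auto simp: R_def)
  show "(\<lambda>x. f x + g x) \<in> R"
    unfolding R_def using f g s t SA.SA_add[OF s(1) t(1)]
    by (auto simp: R_def intro!: continuous_intros bexI[where x="\<lambda>x. s x + t x"])
  show "(\<lambda>x. f x * g x) \<in> R"
    unfolding R_def using f g s t SA_mult'[OF t(1) s(1)]
    by (auto simp: R_def intro!: continuous_intros bexI[where x="\<lambda>x. s x * t x"])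
next
  fix c :: real
  have "(\<lambda>x. complex_of_real c * GG (\<lambda>_. []) x) \<in> SA" by (intro SA.intros) auto
  then show "(\<lambda>_. c) \<in> R" unfolding R_def by (auto simp: GG_nil)
next
  fix x y assume x: "x \<in> M" and y: "y \<in> M" and xy: "x \<noteq> y"
  then obtain i where i: "x$i \<noteq> y$i" by (auto simp: vec_eq_iff)
  let ?w = "\<lambda>t. 1 / (\<xi>0 i - complex_of_real t)"
  have "?w (x$i) \<noteq> ?w (y$i)" using i by simp
  then have "Re (?w (x$i)) \<noteq> Re (?w (y$i)) \<or> Im (?w (x$i)) \<noteq> Im (?w (y$i))"
    by (simp add: complex_eq_iff)
  then show "\<exists>f\<in>R. f x \<noteq> f y"
  proof (elim disjE)
    assume "Re (?w (x$i)) \<noteq> Re (?w (y$i))"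
    then show ?thesis using Re_in_R[of i]
      by (intro bexI[where x="\<lambda>x. Re (1 / (\<xi>0 i - complex_of_real (x$i)))"]) auto
  next
    assume "Im (?w (x$i)) \<noteq> Im (?w (y$i))"
    then show ?thesis using Im_in_R[of i]
      by (intro bexI[where x="\<lambda>x. Im (1 / (\<xi>0 i - complex_of_real (x$i)))"]) auto
  qed
qed

definition Lr :: "'n \<Rightarrow> complex list" where "Lr i = [\<xi>0 i, cnj (\<xi>0 i)]"

definition rho :: "real^'n \<Rightarrow> real" where
  "rho x = (\<Prod>i\<in>UNIV. 1 / (cmod (\<xi>0 i - complex_of_real (x$i)))^2)"

lemma rho_GG: "complex_of_real (rho x) = GG Lr x"
proof -
  have "complex_of_real (1 / (cmod z)^2) = 1 / z * (1 / cnj z * 1)" for z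
    using complex_norm_square[of z] by (simp add: of_real_divide)
  then show ?thesis unfolding rho_def GG_def Lr_def
    by (simp del: of_real_divide of_real_power)
qed

lemma main: assumes "continuous_on M f" shows "(\<lambda>x. complex_of_real (f x)) \<in> B"
proof -
  have okr: "\<forall>i. set (Lr i) \<subseteq> Gm i" using \<xi>0 sym[OF \<xi>0] by (auto simp: Lr_def)
  have ner: "\<forall>i. Lr i \<noteq> []" by (simp add: Lr_def)
  have rpos: "rho x > 0" if "x \<in> M" for x
    unfolding rho_def using den_ne[OF that \<xi>0] by (intro prod_pos) auto
  have rc: "continuous_on M rho"
    unfolding rho_def using den_ne[OF _ \<xi>0] by (intro continuous_intros) auto
  obtain C where C: "C > 0" "\<forall>x\<in>M. cmod (GG Lr x) \<le> C" using GG_bounded[OF okr] by blast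
  have rC: "rho x \<le> C" if "x \<in> M" for x
    using C(2) that rho_GG[of x] rpos[OF that] by (metis norm_of_real abs_of_pos)
  have fc: "continuous_on M (\<lambda>x. f x / rho x)"
    using assms rc by (intro continuous_intros) (auto dest: rpos)
  interpret fr: function_ring_on R M by (rule fr)
  show ?thesis
  proof (rule B_limit)
    fix e :: real assume e: "e > 0"
    obtain h where h: "h \<in> R" "\<forall>x\<in>M. \<bar>f x / rho x - h x\<bar> < e / C"
      using fr.Stone_Weierstrass_basic[OF fc, of "e/C"] e C by auto
    obtain s where s: "s \<in> SA" "\<forall>x\<in>M. complex_of_real (h x) = s x" using h(1) by (auto simp: R_def)
    have gB: "(\<lambda>x. s x * GG Lr x) \<in> B" by (rule SA_B[OF s(1) okr ner])
    have est: "\<forall>x\<in>M. cmod (complex_of_real (f x) - s x * GG Lr x) \<le> e"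
    proof
      fix x assume x: "x \<in> M"
      have "complex_of_real (f x) - s x * GG Lr x = complex_of_real (f x - h x * rho x)"
        using s(2) x rho_GG[of x] by simp
      also have "f x - h x * rho x = rho x * (f x / rho x - h x)"
        using rpos[OF x] by (simp add: field_simps)
      finally have eqc: "complex_of_real (f x) - s x * GG Lr x = complex_of_real (rho x * (f x / rho x - h x))" .
      have n: "cmod (complex_of_real (rho x * (f x / rho x - h x))) = rho x * \<bar>f x / rho x - h x\<bar>"
        using rpos[OF x] by (simp only: norm_of_real abs_mult abs_of_pos)
      have "cmod (complex_of_real (f x) - s x * GG Lr x) = rho x * \<bar>f x / rho x - h x\<bar>"
        unfolding eqc by (rule n)
      also have "\<dots> \<le> C * (e / C)"
        using rC[OF x] h(2) x rpos[OF x] by (intro mult_mono) auto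
      also have "\<dots> = e" using C by simp
      finally show "cmod (complex_of_real (f x) - s x * GG Lr x) \<le> e" .
    qed
    show "\<exists>g\<in>B. \<forall>x\<in>M. cmod (complex_of_real (f x) - g x) \<le> e"
      using est by (intro bexI[OF _ gB])
  qed
qed

lemma KS_repr:
  "s \<in> KS \<Longrightarrow> \<exists>m \<xi> \<theta>. m \<ge> (1::nat) \<and> (\<forall>k\<in>{1..m}. \<forall>i. \<xi> k $ i \<in> Gm i) \<and>
     (\<forall>x. s x = (\<Sum>k=1..m. \<theta> k * cauchy_kernel (\<xi> k) x))"
proof (induction s rule: KS.induct)
  case KS0
  show ?case
    by (rule exI[of _ 1], rule exI[of _ "\<lambda>_. \<chi> i. \<xi>0 i"], rule exI[of _ "\<lambda>_. 0"]) (simp add: \<xi>0)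
next
  case (KS1 s \<xi> c)
  obtain m \<xi>s \<theta> where mm: "m \<ge> (1::nat) \<and> (\<forall>k\<in>{1..m}. \<forall>i. \<xi>s k $ i \<in> Gm i) \<and>
    (\<forall>x. s x = (\<Sum>k=1..m. \<theta> k * cauchy_kernel (\<xi>s k) x))" using KS1.IH by blast
  have m: "m \<ge> 1" "\<forall>k\<in>{1..m}. \<forall>i. \<xi>s k $ i \<in> Gm i"
    "\<forall>x. s x = (\<Sum>k=1..m. \<theta> k * cauchy_kernel (\<xi>s k) x)" using mm by simp_all
  have "\<forall>k\<in>{1..Suc m}. \<forall>i. (\<xi>s(Suc m := \<xi>)) k $ i \<in> Gm i" using m(2) KS1.hyps(2) by auto
  moreover have "\<forall>x. s x + c * cauchy_kernel \<xi> x =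
      (\<Sum>k=1..Suc m. (\<theta>(Suc m := c)) k * cauchy_kernel ((\<xi>s(Suc m := \<xi>)) k) x)"
    using m(3) by (auto intro!: sum.cong)
  ultimately show ?case by (intro exI[of _ "Suc m"] exI[of _ "\<xi>s(Suc m := \<xi>)"] exI[of _ "\<theta>(Suc m := c)"]) auto
qed

end
theorem theorem1:
  fixes Mi :: "'n::finite \<Rightarrow> real set"
    and U :: "'n \<Rightarrow> complex set"
    and f :: "real ^ 'n \<Rightarrow> real"
    and \<epsilon> :: real
  defines "M \<equiv> {x :: real ^ 'n. \<forall>i. x $ i \<in> Mi i}"
  assumes "compact M"
    and "\<And>i. sym_domain (U i)"
    and "\<And>i. closure (U i) \<noteq> UNIV"
    and "\<And>i. complex_of_real ` Mi i \<subseteq> U i"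
    and "continuous_on M f"
    and "\<epsilon> > 0"
  shows "\<exists>(m::nat) (\<xi> :: nat \<Rightarrow> complex ^ 'n) (\<theta> :: nat \<Rightarrow> complex) \<delta>.
           m \<ge> 1 \<and> (\<forall>k\<in>{1..m}. \<forall>i. \<xi> k $ i \<in> frontier (closure (U i))) \<and>
           \<delta> < \<epsilon> \<and>
           (\<forall>x\<in>M. norm (complex_of_real (f x) - (\<Sum>k=1..m. \<theta> k * cauchy_kernel (\<xi> k) x)) \<le> \<delta>)"
proof -
  have sd: "open (U i)" "U i \<noteq> {}" "\<forall>z\<in>U i. cnj z \<in> U i" for i
    using assms(3)[of i] by (auto simp: sym_domain_def)
  interpret K: KSs M "\<lambda>i. frontier (closure (U i))"
  proof
    show "compact M" by (rule assms(2))
  next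
    fix i x assume "x \<in> M"
    then have "complex_of_real (x$i) \<in> U i" using assms(5)[of i] unfolding M_def by auto
    then show "complex_of_real (x$i) \<notin> frontier (closure (U i))" by (rule front_disj[OF sd(1)])
  next
    fix i z assume "z \<in> frontier (closure (U i))"
    then show "z islimpt frontier (closure (U i))" by (rule front_limpt[OF sd(1)])
  next
    fix i show "frontier (closure (U i)) \<noteq> {}"
      using sd(2)[of i] assms(4)[of i] closure_subset[of "U i"]
      by (intro frontier_not_empty) auto
  next
    fix i z assume "z \<in> frontier (closure (U i))"
    then show "cnj z \<in> frontier (closure (U i))" by (rule front_sym[OF sd(3)])
  qed
  have "(\<lambda>x. complex_of_real (f x)) \<in> K.B" by (rule K.main[OF assms(6)])
  then have "\<forall>e>0. \<exists>s\<in>K.KS. \<forall>x\<in>M. cmod (complex_of_real (f x) - s x) \<le> e"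
    unfolding K.B_def by simp
  then have "\<exists>s\<in>K.KS. \<forall>x\<in>M. cmod (complex_of_real (f x) - s x) \<le> \<epsilon>/2"
    using half_gt_zero[OF assms(7)] by blast
  then obtain s where s: "s \<in> K.KS" "\<forall>x\<in>M. cmod (complex_of_real (f x) - s x) \<le> \<epsilon>/2"
    by blast
  obtain m \<xi> \<theta> where r: "m \<ge> (1::nat) \<and> (\<forall>k\<in>{1..m}. \<forall>i. \<xi> k $ i \<in> frontier (closure (U i))) \<and>
     (\<forall>x. s x = (\<Sum>k=1..m. \<theta> k * cauchy_kernel (\<xi> k) x))"
    using K.KS_repr[OF s(1)] by blast
  have r1: "m \<ge> 1" and r2: "\<forall>k\<in>{1..m}. \<forall>i. \<xi> k $ i \<in> frontier (closure (U i))"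
    and r3: "\<And>x. s x = (\<Sum>k=1..m. \<theta> k * cauchy_kernel (\<xi> k) x)"
    using r by simp_all
  have est: "\<forall>x\<in>M. norm (complex_of_real (f x) - (\<Sum>k=1..m. \<theta> k * cauchy_kernel (\<xi> k) x)) \<le> \<epsilon>/2"
    unfolding r3[symmetric] by (rule s(2))
  have "\<epsilon>/2 < \<epsilon>" using assms(7) by simp
  then show ?thesis using r1 r2 est
    by (intro exI[of _ m] exI[of _ \<xi>] exI[of _ \<theta>] exI[of _ "\<epsilon>/2"] conjI)
qed

end
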